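(* Assume $G$ is simply laced. Let $\varpi$ be a minuscule fundamental weight, $\bar\phi\in W/W_{P_\varpi}$, $\phi$ the minimal length element of $\bar\phi$, $\phi=s_{\gamma_1}\cdots s_{\gamma_n}$ a reduced expression with simple roots $\gamma_k$, $\beta_k=i(\gamma_k)$, $\alpha_1=\beta_1$ and $\alpha_k=s_{\beta_1}\cdots s_{\beta_{k-1}}(\beta_k)$. Let $i,x\in[1,n]$ with $\langle\alpha_i^\vee,\alpha_x\rangle=1$. Then for all $j\in[1,n]$, $\langle\alpha_i^\vee,s_{\alpha_x}(\alpha_j)\rangle\ge -1$.
   Context: $G$ is a semisimple algebraic group with maximal torus $T$, Borel subgroup $B$, simple roots $S$, Weyl group $W$ with longest element $w_0$; $s_\alpha$ is the reflection and $\alpha^\vee$ the coroot of a root $\alpha$. The Weyl involution $i$ sends a simple root $\gamma$ to $-w_0(\gamma)$. A fundamental weight $\varpi$ is minuscule if $\langle\alpha^\vee,\varpi\rangle\le1$ for all positive roots $\alpha$; $P_\varpi$ is the associated maximal parabolic subgroup and $W_{P_\varpi}$ its Weyl group. *)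

theory Defs
  imports "HOL-Analysis.Analysis"
begin

text \<open>Root data of a semisimple group, realised as an abstract root system in a
Euclidean space whose inner product is W-invariant (Bourbaki's setting).\<close>

definition cpair :: "'a::euclidean_space \<Rightarrow> 'a \<Rightarrow> real" where
  "cpair \<alpha> v = 2 * (\<alpha> \<bullet> v) / (\<alpha> \<bullet> \<alpha>)"

definition refl :: "'a::euclidean_space \<Rightarrow> 'a \<Rightarrow> 'a" where
  "refl \<alpha> v = v - cpair \<alpha> v *\<^sub>R \<alpha>"

definition root_system :: "'a::euclidean_space set \<Rightarrow> bool" where
  "root_system R \<longleftrightarrow> finite R \<and> 0 \<notin> R \<and> span R = UNIV \<and>
     (\<forall>\<alpha>\<in>R. refl \<alpha> ` R = R) \<and>
     (\<forall>\<alpha>\<in>R. \<forall>\<beta>\<in>R. cpair \<alpha> \<beta> \<in> \<int>) \<and>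
     (\<forall>\<alpha>\<in>R. \<forall>c. c *\<^sub>R \<alpha> \<in> R \<longrightarrow> c = 1 \<or> c = -1)"

definition simply_laced :: "'a::euclidean_space set \<Rightarrow> bool" where
  "simply_laced R \<longleftrightarrow> (\<forall>\<alpha>\<in>R. \<forall>\<beta>\<in>R. \<beta> \<noteq> \<alpha> \<and> \<beta> \<noteq> -\<alpha> \<longrightarrow> \<bar>cpair \<alpha> \<beta>\<bar> \<le> 1)"

definition nonneg_comb :: "'a::euclidean_space set \<Rightarrow> 'a \<Rightarrow> bool" where
  "nonneg_comb S v \<longleftrightarrow> (\<exists>c::'a \<Rightarrow> int. (\<forall>\<gamma>\<in>S. c \<gamma> \<ge> 0) \<and> v = (\<Sum>\<gamma>\<in>S. of_int (c \<gamma>) *\<^sub>R \<gamma>))"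

definition is_base :: "'a::euclidean_space set \<Rightarrow> 'a set \<Rightarrow> bool" where
  "is_base R S \<longleftrightarrow> S \<subseteq> R \<and> independent S \<and>
     (\<forall>\<alpha>\<in>R. nonneg_comb S \<alpha> \<or> nonneg_comb S (-\<alpha>))"

definition pos_roots :: "'a::euclidean_space set \<Rightarrow> 'a set \<Rightarrow> 'a set" where
  "pos_roots R S = {\<alpha>\<in>R. nonneg_comb S \<alpha>}"

inductive_set gen_group :: "('a \<Rightarrow> 'a) set \<Rightarrow> ('a \<Rightarrow> 'a) set" for gens where
  gen_id: "id \<in> gen_group gens"
| gen_step: "g \<in> gens \<Longrightarrow> w \<in> gen_group gens \<Longrightarrow> g \<circ> w \<in> gen_group gens"

definition weyl :: "'a::euclidean_space set \<Rightarrow> ('a \<Rightarrow> 'a) set" where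
  "weyl R = gen_group (refl ` R)"

definition compose_refl :: "'a::euclidean_space list \<Rightarrow> 'a \<Rightarrow> 'a" where
  "compose_refl gs = foldr (\<lambda>\<gamma> f. refl \<gamma> \<circ> f) gs id"

definition weyl_length :: "'a::euclidean_space set \<Rightarrow> ('a \<Rightarrow> 'a) \<Rightarrow> nat" where
  "weyl_length S w = (LEAST n. \<exists>gs. set gs \<subseteq> S \<and> length gs = n \<and> w = compose_refl gs)"

definition minuscule_fund_weight :: "'a::euclidean_space set \<Rightarrow> 'a set \<Rightarrow> 'a \<Rightarrow> 'a \<Rightarrow> bool" where
  "minuscule_fund_weight R S \<delta> \<omega> \<longleftrightarrow> \<delta> \<in> S \<and> cpair \<delta> \<omega> = 1 \<and>
     (\<forall>\<gamma>\<in>S. \<gamma> \<noteq> \<delta> \<longrightarrow> cpair \<gamma> \<omega> = 0) \<and>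
     (\<forall>\<alpha>\<in>pos_roots R S. cpair \<alpha> \<omega> \<le> 1)"

text \<open>W_{P_\<omega>}: generated by the simple reflections fixing \<omega>.\<close>
definition parabolic_weyl :: "'a::euclidean_space set \<Rightarrow> 'a \<Rightarrow> ('a \<Rightarrow> 'a) set" where
  "parabolic_weyl S \<delta> = gen_group (refl ` (S - {\<delta>}))"

definition left_coset :: "('a \<Rightarrow> 'a) \<Rightarrow> ('a \<Rightarrow> 'a) set \<Rightarrow> ('a \<Rightarrow> 'a) set" where
  "left_coset w H = (\<lambda>u. w \<circ> u) ` H"

end

theory Submission
  imports Defs
begin


lemma refl_inner: "refl a u \<bullet> refl a v = u \<bullet> v"
proof (cases "a = 0")
  case True thus ?thesis by (simp add: refl_def cpair_def)
next
  case False
  hence aa: "a \<bullet> a \<noteq> 0" by simp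
  show ?thesis unfolding refl_def cpair_def
    using aa by (simp add: inner_diff_left inner_diff_right algebra_simps inner_commute field_simps)
qed

lemma refl_refl[simp]: "refl a (refl a v) = v"
proof (cases "a = 0")
  case True thus ?thesis by (simp add: refl_def cpair_def)
next
  case False
  hence aa: "a \<bullet> a \<noteq> 0" by simp
  show ?thesis unfolding refl_def cpair_def
    using aa by (simp add: inner_diff_right algebra_simps field_simps)
qed

lemma refl_self: "a \<noteq> 0 \<Longrightarrow> refl a a = - a"
  by (simp add: refl_def cpair_def scaleR_2 algebra_simps)

lemma refl_neg[simp]: "refl (- a) = refl a"
  by (rule ext) (simp add: refl_def cpair_def)

lemma linear_refl: "linear (refl a)"
  unfolding refl_def cpair_def
  by (rule linearI) (simp_all add: inner_add_right algebra_simps scaleR_add_left add_divide_distrib inner_scaleR_right)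

lemma cpair_lin: "cpair a (u + v) = cpair a u + cpair a v" "cpair a (c *\<^sub>R u) = c * cpair a u"
  "cpair a (u - v) = cpair a u - cpair a v" "cpair a (- v) = - cpair a v"
  by (simp_all add: cpair_def inner_add_right inner_diff_right add_divide_distrib diff_divide_distrib algebra_simps)

definition iso :: "('a::euclidean_space \<Rightarrow> 'a) \<Rightarrow> bool" where
  "iso u \<longleftrightarrow> linear u \<and> (\<forall>a b. u a \<bullet> u b = a \<bullet> b)"

lemma iso_refl: "iso (refl a)" by (simp add: iso_def linear_refl refl_inner)
lemma iso_id: "iso id" by (simp add: iso_def linear_id)
lemma iso_comp: "iso u \<Longrightarrow> iso v \<Longrightarrow> iso (u \<circ> v)"
  by (simp add: iso_def linear_compose)

lemma iso_cpair: "iso u \<Longrightarrow> cpair (u a) (u b) = cpair a b"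
  by (simp add: iso_def cpair_def)

lemma iso_conj: assumes "iso u" shows "u (refl a v) = refl (u a) (u v)"
proof -
  have l: "linear u" using assms by (simp add: iso_def)
  show ?thesis unfolding refl_def
    using iso_cpair[OF assms, of a v] linear_diff[OF l] linear_scale[OF l] by simp
qed

lemma iso_conj_fun: "iso u \<Longrightarrow> u \<circ> refl a = refl (u a) \<circ> u"
  by (rule ext) (simp add: iso_conj)

lemma compose_refl_Nil[simp]: "compose_refl [] = id" by (simp add: compose_refl_def)
lemma compose_refl_Cons[simp]: "compose_refl (g # gs) = refl g \<circ> compose_refl gs"
  by (simp add: compose_refl_def)
lemma compose_refl_append: "compose_refl (xs @ ys) = compose_refl xs \<circ> compose_refl ys"
  by (induction xs) auto

lemma iso_compose_refl: "iso (compose_refl gs)"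
proof (induction gs)
  case Nil thus ?case using iso_id by (simp add: id_def)
next
  case (Cons a gs) thus ?case unfolding compose_refl_Cons by (rule iso_comp[OF iso_refl])
qed

lemma compose_refl_rev_inv[simp]: "compose_refl (rev gs) (compose_refl gs v) = v"
  by (induction gs arbitrary: v) (auto simp: compose_refl_append)

lemma compose_refl_inv_rev[simp]: "compose_refl gs (compose_refl (rev gs) v) = v"
  using compose_refl_rev_inv[of "rev gs"] by simp

lemma gen_group_comp: "u \<in> gen_group G \<Longrightarrow> v \<in> gen_group G \<Longrightarrow> u \<circ> v \<in> gen_group G"
  by (induction rule: gen_group.induct) (auto simp: comp_assoc intro: gen_group.intros)

lemma gen_group_gen: "g \<in> G \<Longrightarrow> g \<in> gen_group G"
  using gen_group.gen_step[OF _ gen_group.gen_id] by fastforce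

lemma weyl_iso: "w \<in> weyl R \<Longrightarrow> iso w"
  unfolding weyl_def
proof (induction rule: gen_group.induct)
  case gen_id thus ?case by (rule iso_id)
next
  case (gen_step g w) thus ?case using iso_comp[OF _ gen_step(3)] iso_refl by blast
qed

lemma weyl_length_le: "set hs \<subseteq> S \<Longrightarrow> f = compose_refl hs \<Longrightarrow> weyl_length S f \<le> length hs"
  unfolding weyl_length_def by (rule Least_le) blast

lemma root_refl_closed: "root_system R \<Longrightarrow> a \<in> R \<Longrightarrow> b \<in> R \<Longrightarrow> refl a b \<in> R"
  unfolding root_system_def by blast

lemma compose_refl_closed: "root_system R \<Longrightarrow> set hs \<subseteq> R \<Longrightarrow> b \<in> R \<Longrightarrow> compose_refl hs b \<in> R"
  by (induction hs arbitrary: b) (auto intro: root_refl_closed)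




definition coef :: "'a::euclidean_space set \<Rightarrow> 'a \<Rightarrow> 'a \<Rightarrow> real" where
  "coef S g0 = (SOME f. linear f \<and> (\<forall>x\<in>S. f x = (if x = g0 then 1 else 0)))"

definition hgt :: "'a::euclidean_space set \<Rightarrow> 'a \<Rightarrow> real" where
  "hgt S = (SOME f. linear f \<and> (\<forall>x\<in>S. f x = 1))"

lemma coef_prop: assumes "independent S"
  shows "linear (coef S g0) \<and> (\<forall>x\<in>S. coef S g0 x = (if x = g0 then 1 else 0))"
proof -
  obtain f :: "'a \<Rightarrow> real" where f: "linear f \<and> (\<forall>x\<in>S. f x = (if x = g0 then 1 else 0))"
    using linear_independent_extend[OF assms, of "\<lambda>x. if x = g0 then 1 else 0"] by auto
  show ?thesis unfolding coef_def
    using someI[of "\<lambda>f. linear f \<and> (\<forall>x\<in>S. f x = (if x = g0 then 1 else 0))" f, OF f] .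
qed

lemma hgt_prop: assumes "independent S"
  shows "linear (hgt S) \<and> (\<forall>x\<in>S. hgt S x = 1)"
proof -
  obtain f :: "'a \<Rightarrow> real" where f: "linear f \<and> (\<forall>x\<in>S. f x = 1)"
    using linear_independent_extend[OF assms, of "\<lambda>x. 1"] by auto
  show ?thesis unfolding hgt_def
    using someI[of "\<lambda>f. linear f \<and> (\<forall>x\<in>S. f x = 1)" f, OF f] .
qed

lemma lin_comb: "linear f \<Longrightarrow> f (\<Sum>x\<in>S. of_int (c x) *\<^sub>R x) = (\<Sum>x\<in>S. of_int (c x) * (f x::real))"
  by (simp add: linear_sum linear_scale real_scaleR_def)

lemma coef_sum: assumes "independent S" "finite S" "g0 \<in> S"
  shows "coef S g0 (\<Sum>x\<in>S. of_int (c x) *\<^sub>R x) = of_int (c g0)"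
proof -
  have "coef S g0 (\<Sum>x\<in>S. of_int (c x) *\<^sub>R x) = (\<Sum>x\<in>S. of_int (c x) * coef S g0 x)"
    using lin_comb coef_prop[OF assms(1)] by blast
  also have "\<dots> = (\<Sum>x\<in>S. if x = g0 then of_int (c x) else 0)"
    using coef_prop[OF assms(1)] by (intro sum.cong) auto
  also have "\<dots> = of_int (c g0)" using assms by (simp add: sum.delta)
  finally show ?thesis .
qed

lemma hgt_sum: assumes "independent S"
  shows "hgt S (\<Sum>x\<in>S. of_int (c x) *\<^sub>R x) = (\<Sum>x\<in>S. of_int (c x))"
proof -
  have "hgt S (\<Sum>x\<in>S. of_int (c x) *\<^sub>R x) = (\<Sum>x\<in>S. of_int (c x) * hgt S x)"
    using lin_comb hgt_prop[OF assms(1)] by blast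
  also have "\<dots> = (\<Sum>x\<in>S. of_int (c x))"
    using hgt_prop[OF assms(1)] by (intro sum.cong) auto
  finally show ?thesis .
qed

definition posr :: "'a::euclidean_space set \<Rightarrow> 'a set \<Rightarrow> 'a \<Rightarrow> bool" where
  "posr R S v \<longleftrightarrow> v \<in> R \<and> nonneg_comb S v"

locale rsys =
  fixes R S :: "'a::euclidean_space set" and \<delta> \<omega> :: 'a
  assumes rs: "root_system R" and base: "is_base R S" and sl: "simply_laced R"
    and mfw: "minuscule_fund_weight R S \<delta> \<omega>"

context rsys
begin

lemma finR: "finite R" using rs unfolding root_system_def by simp
lemma zR: "0 \<notin> R" using rs unfolding root_system_def by simp
lemma reflR: "a \<in> R \<Longrightarrow> b \<in> R \<Longrightarrow> refl a b \<in> R"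
  using rs unfolding root_system_def by (metis image_eqI)
lemma intR: "a \<in> R \<Longrightarrow> b \<in> R \<Longrightarrow> cpair a b \<in> \<int>"
  using rs unfolding root_system_def by simp
lemma redR: "a \<in> R \<Longrightarrow> c *\<^sub>R a \<in> R \<Longrightarrow> c = 1 \<or> c = -1"
  using rs unfolding root_system_def by simp
lemma SR: "S \<subseteq> R" using base unfolding is_base_def by simp
lemma indS: "independent S" using base unfolding is_base_def by simp
lemma pm: "a \<in> R \<Longrightarrow> nonneg_comb S a \<or> nonneg_comb S (- a)"
  using base unfolding is_base_def by simp

lemma finS: "finite S" using SR finR finite_subset by blast

lemma dS: "\<delta> \<in> S" using mfw unfolding minuscule_fund_weight_def by simp
lemma dw: "cpair \<delta> \<omega> = 1" using mfw unfolding minuscule_fund_weight_def by simp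
lemma gw: "g \<in> S \<Longrightarrow> g \<noteq> \<delta> \<Longrightarrow> cpair g \<omega> = 0"
  using mfw unfolding minuscule_fund_weight_def by simp
lemma posw: "a \<in> pos_roots R S \<Longrightarrow> cpair a \<omega> \<le> 1"
  using mfw unfolding minuscule_fund_weight_def by simp

lemma nzR: "a \<in> R \<Longrightarrow> a \<bullet> a > 0" using zR by (metis inner_gt_zero_iff)

lemma negR: "a \<in> R \<Longrightarrow> - a \<in> R"
  using reflR[of a a] refl_self[of a] zR by metis

lemma dw2: "2 * (\<delta> \<bullet> \<omega>) = \<delta> \<bullet> \<delta>"
  using dw nzR[of \<delta>] dS SR by (auto simp: cpair_def field_simps)

lemma gw0: "g \<in> S \<Longrightarrow> g \<noteq> \<delta> \<Longrightarrow> g \<bullet> \<omega> = 0"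
  using gw[of g] nzR[of g] SR by (auto simp: cpair_def field_simps)

lemma coefd_lin: "linear (coef S \<delta>)" using coef_prop[OF indS] by blast
lemma hgt_lin: "linear (hgt S)" using hgt_prop[OF indS] by blast

lemma comb_omega: "(\<Sum>x\<in>S. of_int (c x) *\<^sub>R x) \<bullet> \<omega> = of_int (c \<delta>) * (\<delta> \<bullet> \<delta> / 2)"
proof -
  have "(\<Sum>x\<in>S. of_int (c x) *\<^sub>R x) \<bullet> \<omega> = (\<Sum>x\<in>S. of_int (c x) * (x \<bullet> \<omega>))"
    by (simp add: inner_sum_left)
  also have "\<dots> = (\<Sum>x\<in>S. if x = \<delta> then of_int (c x) * (\<delta> \<bullet> \<delta> / 2) else 0)"
    using gw0 dw2 by (intro sum.cong) auto
  also have "\<dots> = of_int (c \<delta>) * (\<delta> \<bullet> \<delta> / 2)" using dS finS by (simp add: sum.delta)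
  finally show ?thesis .
qed

lemma pos_omega: "nonneg_comb S v \<Longrightarrow> v \<bullet> \<omega> = coef S \<delta> v * (\<delta> \<bullet> \<delta> / 2)"
  unfolding nonneg_comb_def using comb_omega coef_sum[OF indS finS dS] by auto

lemma pos_coef: "nonneg_comb S v \<Longrightarrow> g \<in> S \<Longrightarrow> \<exists>k::int. k \<ge> 0 \<and> coef S g v = of_int k"
  unfolding nonneg_comb_def using coef_sum[OF indS finS] by fastforce

lemma pos_hgt: "nonneg_comb S v \<Longrightarrow> hgt S v \<ge> 0"
  unfolding nonneg_comb_def using hgt_sum[OF indS] by (auto intro!: sum_nonneg)

end



lemma int_pos_le1: "(x::real) \<in> \<int> \<Longrightarrow> 0 < x \<Longrightarrow> x \<ge> 1"
proof -
  assume a: "x \<in> \<int>" "0 < x"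
  obtain k where k: "x = of_int k" using a(1) by (auto elim: Ints_cases)
  hence "0 < k" using a(2) by simp
  hence "1 \<le> k" by simp
  thus ?thesis using k by simp
qed

context rsys
begin

lemma posr_R: "posr R S p \<Longrightarrow> p \<in> R" by (simp add: posr_def)

lemma coef_lin: "linear (coef S x)" using coef_prop[OF indS] by blast

lemma coef_S: "x \<in> S \<Longrightarrow> g \<in> S \<Longrightarrow> coef S x g = (if g = x then 1 else 0)"
  using coef_prop[OF indS, of x] by simp

lemma SP: assumes gS: "g \<in> S" and pr: "posr R S r" and ne: "r \<noteq> g"
  shows "posr R S (refl g r)"
proof -
  have gR: "g \<in> R" using gS SR by blast
  have rR: "r \<in> R" using pr by (simp add: posr_def)
  have R': "refl g r \<in> R" using reflR gR rR by blast
  obtain c where c0: "\<forall>x\<in>S. c x \<ge> 0" and cr: "r = (\<Sum>x\<in>S. of_int (c x) *\<^sub>R x)"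
    using pr unfolding posr_def nonneg_comb_def by blast
  show ?thesis
  proof (rule ccontr)
    assume np: "\<not> posr R S (refl g r)"
    hence "nonneg_comb S (- refl g r)" using pm[OF R'] R' by (auto simp: posr_def)
    then obtain d where d0: "\<forall>x\<in>S. d x \<ge> 0" and dr: "- refl g r = (\<Sum>x\<in>S. of_int (d x) *\<^sub>R x)"
      unfolding nonneg_comb_def by blast
    have zero: "c x = 0" if xS: "x \<in> S" and xg: "x \<noteq> g" for x
    proof -
      have l: "linear (coef S x)" by (rule coef_lin)
      have "coef S x (- refl g r) = of_int (d x)" using coef_sum[OF indS finS xS] dr by simp
      moreover have "coef S x (- refl g r) = - (coef S x r - cpair g r * coef S x g)"
        unfolding refl_def using linear_neg[OF l] linear_diff[OF l] linear_scale[OF l] by simp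
      moreover have "coef S x r = of_int (c x)" using coef_sum[OF indS finS xS] cr by simp
      moreover have "coef S x g = 0" using coef_S[OF xS gS] xg by simp
      ultimately have "of_int (d x) = - (of_int (c x) :: real)" by simp
      hence "d x = - c x" by linarith
      thus ?thesis using d0 c0 xS by force
    qed
    have "r = of_int (c g) *\<^sub>R g + (\<Sum>x\<in>S - {g}. of_int (c x) *\<^sub>R x)"
      using cr sum.remove[OF finS gS] by simp
    also have "(\<Sum>x\<in>S - {g}. of_int (c x) *\<^sub>R x) = 0"
      using zero by (intro sum.neutral) auto
    finally have rg: "r = of_int (c g) *\<^sub>R g" by simp
    hence "real_of_int (c g) = 1 \<or> real_of_int (c g) = -1" using redR[OF gR, of "of_int (c g)"] rR by blast
    hence "c g = 1 \<or> c g = -1" by (metis of_int_1 of_int_eq_iff of_int_minus)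
    hence "c g = 1" using c0 gS by force
    thus False using rg ne by simp
  qed
qed

lemma desc: assumes pr: "posr R S p"
  obtains g where "g \<in> S" "coef S g p > 0" "g \<bullet> p > 0"
proof -
  obtain c where c0: "\<forall>x\<in>S. c x \<ge> 0" and cr: "p = (\<Sum>x\<in>S. of_int (c x) *\<^sub>R x)"
    using pr unfolding posr_def nonneg_comb_def by blast
  have pp: "p \<bullet> p > 0" using nzR pr by (simp add: posr_def)
  have ps: "p \<bullet> p = (\<Sum>x\<in>S. of_int (c x) * (x \<bullet> p))"
    by (subst (1) cr) (simp add: inner_sum_left)
  have "\<exists>x\<in>S. of_int (c x) * (x \<bullet> p) > 0"
  proof (rule ccontr)
    assume "\<not> (\<exists>x\<in>S. of_int (c x) * (x \<bullet> p) > 0)"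
    hence "\<forall>x\<in>S. of_int (c x) * (x \<bullet> p) \<le> (0::real)" by (simp add: not_less)
    hence "(\<Sum>x\<in>S. of_int (c x) * (x \<bullet> p)) \<le> (0::real)" by (meson sum_nonpos)
    thus False using pp ps by simp
  qed
  then obtain g where gS: "g \<in> S" and pos: "of_int (c g) * (g \<bullet> p) > 0" by blast
  have "c g \<noteq> 0" using pos by auto
  moreover have "c g \<ge> 0" using c0 gS by blast
  ultimately have cg: "of_int (c g) > (0::real)" by simp
  hence "g \<bullet> p > 0" using pos by (simp add: zero_less_mult_iff)
  moreover have "coef S g p = of_int (c g)" using coef_sum[OF indS finS gS] cr by simp
  ultimately show ?thesis using that gS cg by simp
qed

lemma step: assumes pr: "posr R S p" and gS: "g \<in> S" and gp: "g \<bullet> p > 0" and ne: "p \<noteq> g"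
  shows "posr R S (refl g p)" "hgt S (refl g p) \<le> hgt S p - 1"
    "refl g p = p - cpair g p *\<^sub>R g" "cpair g p \<ge> 1"
proof -
  show "posr R S (refl g p)" using SP gS pr ne by blast
  show rf: "refl g p = p - cpair g p *\<^sub>R g" by (simp add: refl_def)
  have gR: "g \<in> R" using gS SR by blast
  have "cpair g p \<in> \<int>" using intR gR pr by (simp add: posr_def)
  moreover have "cpair g p > 0" using gp nzR[OF gR] by (simp add: cpair_def)
  ultimately show m: "cpair g p \<ge> 1" by (rule int_pos_le1)
  have l: "linear (hgt S)" by (rule hgt_lin)
  have "hgt S (refl g p) = hgt S p - cpair g p * hgt S g"
    unfolding rf using linear_diff[OF l] linear_scale[OF l] by simp
  also have "hgt S g = 1" using hgt_prop[OF indS] gS by blast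
  finally show "hgt S (refl g p) \<le> hgt S p - 1" using m by simp
qed

lemma pos_induct: assumes "posr R S p"
  and IH: "\<And>p. posr R S p \<Longrightarrow> (\<And>q. posr R S q \<Longrightarrow> hgt S q \<le> hgt S p - 1 \<Longrightarrow> P q) \<Longrightarrow> P p"
  shows "P p"
proof -
  have "\<forall>p. posr R S p \<longrightarrow> hgt S p < real h \<longrightarrow> P p" for h :: nat
  proof (induction h)
    case 0
    show ?case
    proof (intro allI impI)
      fix p assume "posr R S p" "hgt S p < real 0"
      moreover have "0 \<le> hgt S p" using pos_hgt \<open>posr R S p\<close> by (simp add: posr_def)
      ultimately show "P p" by simp
    qed
  next
    case (Suc h)
    show ?case
    proof (intro allI impI)
      fix p assume a: "posr R S p" "hgt S p < real (Suc h)"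
      show "P p"
      proof (rule IH[OF a(1)])
        fix q assume "posr R S q" "hgt S q \<le> hgt S p - 1"
        thus "P q" using Suc.IH a(2) by auto
      qed
    qed
  qed
  moreover obtain h :: nat where "hgt S p < real h" using reals_Archimedean2 by blast
  ultimately show ?thesis using assms(1) by blast
qed

lemma coefd_refl: assumes "g \<in> S" "g \<noteq> \<delta>"
  shows "coef S \<delta> (p - m *\<^sub>R g) = coef S \<delta> p"
proof -
  have l: "linear (coef S \<delta>)" by (rule coef_lin)
  have "coef S \<delta> g = 0" using coef_S[OF dS assms(1)] assms(2) by simp
  thus ?thesis using linear_diff[OF l] linear_scale[OF l] by simp
qed

lemma WP: assumes "posr R S p" "coef S \<delta> p = 0" shows "refl p \<in> parabolic_weyl S \<delta>"
proof -
  have "coef S \<delta> p = 0 \<longrightarrow> refl p \<in> parabolic_weyl S \<delta>" using assms(1)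
  proof (rule pos_induct[where P="\<lambda>p. coef S \<delta> p = 0 \<longrightarrow> refl p \<in> parabolic_weyl S \<delta>"])
    fix p assume p1: "posr R S p" and IH0: "\<And>q. posr R S q \<Longrightarrow> hgt S q \<le> hgt S p - 1 \<Longrightarrow> coef S \<delta> q = 0 \<longrightarrow> refl q \<in> parabolic_weyl S \<delta>"
    have IH: "\<And>q. posr R S q \<Longrightarrow> hgt S q \<le> hgt S p - 1 \<Longrightarrow> coef S \<delta> q = 0 \<Longrightarrow> refl q \<in> parabolic_weyl S \<delta>"
      using IH0 by blast
    show "coef S \<delta> p = 0 \<longrightarrow> refl p \<in> parabolic_weyl S \<delta>"
    proof
      assume p3: "coef S \<delta> p = 0"
  obtain g where gS: "g \<in> S" and cg: "coef S g p > 0" and gp: "g \<bullet> p > 0"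
    using desc[OF p1] by blast
  have gd: "g \<noteq> \<delta>" using cg p3 by auto
  have gW: "refl g \<in> parabolic_weyl S \<delta>"
    unfolding parabolic_weyl_def using gS gd by (intro gen_group_gen) auto
  show "refl p \<in> parabolic_weyl S \<delta>"
  proof (cases "p = g")
    case True thus ?thesis using gW by simp
  next
    case False
    note st = step[OF p1 gS gp False]
    have "coef S \<delta> (refl g p) = 0" using st(3) coefd_refl[OF gS gd] p3 by simp
    hence qW: "refl (refl g p) \<in> parabolic_weyl S \<delta>" using IH[OF st(1) st(2)] by simp
    have "refl g \<circ> refl (refl g p) = refl (refl g (refl g p)) \<circ> refl g"
      by (rule iso_conj_fun[OF iso_refl])
    hence "refl g \<circ> refl (refl g p) \<circ> refl g = refl p"
      by (simp add: fun_eq_iff)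
    moreover have "refl g \<circ> refl (refl g p) \<circ> refl g \<in> parabolic_weyl S \<delta>"
      unfolding parabolic_weyl_def using gW qW unfolding parabolic_weyl_def
      by (intro gen_group_comp)
    ultimately show ?thesis by simp
  qed
    qed
  qed
  thus ?thesis using assms(2) by simp
qed

lemma slR: "a \<in> R \<Longrightarrow> b \<in> R \<Longrightarrow> b \<noteq> a \<Longrightarrow> b \<noteq> - a \<Longrightarrow> \<bar>cpair a b\<bar> \<le> 1"
  using sl unfolding simply_laced_def by blast

lemma LEN: assumes "posr R S p" "coef S \<delta> p > 0" shows "p \<bullet> p = \<delta> \<bullet> \<delta>"
proof -
  have "coef S \<delta> p > 0 \<longrightarrow> p \<bullet> p = \<delta> \<bullet> \<delta>" using assms(1)
  proof (rule pos_induct[where P="\<lambda>p. coef S \<delta> p > 0 \<longrightarrow> p \<bullet> p = \<delta> \<bullet> \<delta>"])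
    fix p assume p1: "posr R S p" and IH0: "\<And>q. posr R S q \<Longrightarrow> hgt S q \<le> hgt S p - 1 \<Longrightarrow> coef S \<delta> q > 0 \<longrightarrow> q \<bullet> q = \<delta> \<bullet> \<delta>"
    have IH: "\<And>q. posr R S q \<Longrightarrow> hgt S q \<le> hgt S p - 1 \<Longrightarrow> coef S \<delta> q > 0 \<Longrightarrow> q \<bullet> q = \<delta> \<bullet> \<delta>"
      using IH0 by blast
    show "coef S \<delta> p > 0 \<longrightarrow> p \<bullet> p = \<delta> \<bullet> \<delta>"
    proof
      assume p3: "coef S \<delta> p > 0"
  obtain g where gS: "g \<in> S" and cg: "coef S g p > 0" and gp: "g \<bullet> p > 0"
    using desc[OF p1] by blast
  have pR: "p \<in> R" using p1 by (simp add: posr_def)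
  have dR: "\<delta> \<in> R" using dS SR by blast
  show "p \<bullet> p = \<delta> \<bullet> \<delta>"
  proof (cases "g = \<delta>")
    case True
    show ?thesis
    proof (cases "p = \<delta>")
      case True thus ?thesis by simp
    next
      case False
      have "p \<noteq> - \<delta>"
      proof
        assume "p = - \<delta>"
        hence "g \<bullet> p = - (\<delta> \<bullet> \<delta>)" using True by simp
        thus False using gp nzR[OF dR] by linarith
      qed
      moreover have "\<delta> \<noteq> - p" using calculation by auto
      ultimately have b1: "\<bar>cpair \<delta> p\<bar> \<le> 1" "\<bar>cpair p \<delta>\<bar> \<le> 1" using slR[OF dR pR] slR[OF pR dR] False
        by auto
      have q1: "cpair \<delta> p > 0" "cpair p \<delta> > 0" using gp True nzR[OF dR] nzR[OF pR]
        by (auto simp: cpair_def inner_commute)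
      have "cpair \<delta> p = 1" using int_pos_le1[OF intR[OF dR pR] q1(1)] b1(1) by simp
      moreover have "cpair p \<delta> = 1" using int_pos_le1[OF intR[OF pR dR] q1(2)] b1(2) by simp
      ultimately show ?thesis using nzR[OF dR] nzR[OF pR] by (auto simp: cpair_def inner_commute field_simps)
    qed
  next
    case gd: False
    have ne: "p \<noteq> g"
    proof
      assume "p = g" thus False using coef_S[OF dS gS] gd p3 by simp
    qed
    note st = step[OF p1 gS gp ne]
    have "coef S \<delta> (refl g p) > 0" using st(3) coefd_refl[OF gS gd] p3 by simp
    hence "refl g p \<bullet> refl g p = \<delta> \<bullet> \<delta>" using IH[OF st(1) st(2)] by simp
    thus ?thesis by (simp add: refl_inner)
  qed
    qed
  qed
  thus ?thesis using assms(2) by simp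
qed

end



context rsys
begin

lemma cpair_self: "p \<in> R \<Longrightarrow> cpair p p = 2"
  using nzR[of p] by (simp add: cpair_def)

lemma coef_ge1: assumes "posr R S p" "coef S \<delta> p > 0" shows "coef S \<delta> p \<ge> 1"
proof -
  obtain k :: int where "k \<ge> 0" "coef S \<delta> p = of_int k"
    using pos_coef[OF _ dS] assms(1) by (auto simp: posr_def)
  thus ?thesis using assms(2) by simp
qed

lemma coef_neg: "coef S \<delta> (- p) = - coef S \<delta> p"
  using linear_neg[OF coef_lin] by simp

lemma Kp: assumes pp: "posr R S p" and qp: "posr R S q" and pc: "coef S \<delta> p > 0" and qc: "coef S \<delta> q > 0"
  shows "cpair p q \<ge> 0"
proof (rule ccontr)
  assume "\<not> cpair p q \<ge> 0"
  hence neg: "cpair p q < 0" by simp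
  have pR: "p \<in> R" and qR: "q \<in> R" using pp qp by (auto simp: posr_def)
  have "q \<noteq> p" using neg cpair_self[OF pR] by auto
  moreover have "q \<noteq> - p" using pc qc coef_neg[of p] by auto
  ultimately have b: "\<bar>cpair p q\<bar> \<le> 1" using slR[OF pR qR] by blast
  have "- cpair p q \<in> \<int>" using intR[OF pR qR] by simp
  hence "- cpair p q \<ge> 1" using neg by (intro int_pos_le1) auto
  hence m1: "cpair p q = -1" using b by simp
  have Lp: "p \<bullet> p = \<delta> \<bullet> \<delta>" and Lq: "q \<bullet> q = \<delta> \<bullet> \<delta>" using LEN pp qp pc qc by auto
  have dd: "\<delta> \<bullet> \<delta> > 0" using nzR dS SR by blast
  have pq: "p \<bullet> q = - (\<delta> \<bullet> \<delta>) / 2" using m1 Lp dd by (simp add: cpair_def field_simps)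
  have "refl p q = q + p" using m1 by (simp add: refl_def)
  hence rR: "p + q \<in> R" using reflR[OF pR qR] by (simp add: add.commute)
  have nc: "nonneg_comb S (p + q)"
  proof -
    obtain c where c0: "\<forall>x\<in>S. c x \<ge> 0" and cr: "p = (\<Sum>x\<in>S. of_int (c x) *\<^sub>R x)"
      using pp unfolding posr_def nonneg_comb_def by blast
    obtain d where d0: "\<forall>x\<in>S. d x \<ge> 0" and dr: "q = (\<Sum>x\<in>S. of_int (d x) *\<^sub>R x)"
      using qp unfolding posr_def nonneg_comb_def by blast
    have "p + q = (\<Sum>x\<in>S. of_int (c x + d x) *\<^sub>R x)"
      unfolding cr dr by (simp add: sum.distrib scaleR_add_left)
    thus ?thesis unfolding nonneg_comb_def using c0 d0
      by (intro exI[of _ "\<lambda>x. c x + d x"]) auto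
  qed
  hence "p + q \<in> pos_roots R S" using rR by (simp add: pos_roots_def)
  hence le: "cpair (p + q) \<omega> \<le> 1" by (rule posw)
  have rr: "(p + q) \<bullet> (p + q) = \<delta> \<bullet> \<delta>" using Lp Lq pq
    by (simp add: inner_add_left inner_add_right inner_commute)
  have "(p + q) \<bullet> \<omega> = (coef S \<delta> p + coef S \<delta> q) * (\<delta> \<bullet> \<delta> / 2)"
  proof -
    have "p \<bullet> \<omega> = coef S \<delta> p * (\<delta> \<bullet> \<delta> / 2)" using pos_omega pp by (simp add: posr_def)
    moreover have "q \<bullet> \<omega> = coef S \<delta> q * (\<delta> \<bullet> \<delta> / 2)" using pos_omega qp by (simp add: posr_def)
    ultimately show ?thesis by (simp add: inner_add_left algebra_simps)
  qed
  hence "cpair (p + q) \<omega> = coef S \<delta> p + coef S \<delta> q" using rr dd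
    by (simp add: cpair_def field_simps)
  moreover have "coef S \<delta> p \<ge> 1" "coef S \<delta> q \<ge> 1" using coef_ge1 pp qp pc qc by auto
  ultimately show False using le by simp
qed

lemma FIN: assumes pa: "posr R S pa" and pj: "posr R S pj" and px: "posr R S px"
  and ci: "coef S \<delta> pa > 0" and cj: "coef S \<delta> pj > 0" and cx: "coef S \<delta> px > 0"
  and ix: "cpair pa px = 1"
  shows "cpair pa (refl px pj) \<ge> -1"
proof -
  have pxR: "px \<in> R" and pjR: "pj \<in> R" using px pj by (auto simp: posr_def)
  have eq: "cpair pa (refl px pj) = cpair pa pj - cpair px pj"
    unfolding refl_def using ix by (simp add: cpair_lin)
  show ?thesis
  proof (cases "pj = px")
    case True thus ?thesis using eq ix cpair_self[OF pxR] by simp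
  next
    case False
    moreover have "pj \<noteq> - px" using cx cj coef_neg[of px] by auto
    ultimately have "\<bar>cpair px pj\<bar> \<le> 1" using slR[OF pxR pjR] by blast
    moreover have "cpair pa pj \<ge> 0" using Kp[OF pa pj ci cj] .
    ultimately show ?thesis using eq by simp
  qed
qed

end



lemma compose_refl_map: "iso w \<Longrightarrow> compose_refl (map (\<lambda>g. - w g) hs) (w v) = w (compose_refl hs v)"
  by (induction hs arbitrary: v) (simp_all add: iso_conj)

lemma discrete: "P 0 \<Longrightarrow> \<not> P l \<Longrightarrow> \<exists>m<l. P m \<and> \<not> P (Suc m)"
proof (induction l)
  case 0 thus ?case by simp
next
  case (Suc l) thus ?case by (cases "P l") (auto intro: less_SucI)
qed

context rsys
begin

lemma S_pos: assumes "g \<in> S" shows "posr R S g"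
proof -
  have "(\<Sum>x\<in>S. of_int (if x = g then 1 else 0) *\<^sub>R x) = (\<Sum>x\<in>S. if x = g then x else 0)"
    by (intro sum.cong) auto
  also have "\<dots> = g" using assms finS by (simp add: sum.delta)
  finally have "nonneg_comb S g" unfolding nonneg_comb_def
    by (intro exI[of _ "\<lambda>x. if x = g then 1 else 0"]) auto
  thus ?thesis using assms SR by (auto simp: posr_def)
qed

lemma INV:
  assumes gsS: "set gs \<subseteq> S" and len: "weyl_length S (compose_refl gs) = length gs"
    and k: "k < length gs"
    and cos: "\<phi>bar = left_coset w (parabolic_weyl S \<delta>)" and mem: "compose_refl gs \<in> \<phi>bar"
    and mini: "\<forall>\<psi>\<in>\<phi>bar. weyl_length S (compose_refl gs) \<le> weyl_length S \<psi>"
  shows "posr R S (compose_refl (rev (drop (Suc k) gs)) (gs ! k)) \<and>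
         coef S \<delta> (compose_refl (rev (drop (Suc k) gs)) (gs ! k)) > 0"
proof -
  define L where "L = drop (Suc k) gs"
  define g where "g = gs ! k"
  define A where "A = take k gs"
  have gsd: "gs = A @ g # L" using id_take_nth_drop[OF k] by (simp add: A_def g_def L_def)
  have phi: "compose_refl gs = compose_refl A \<circ> refl g \<circ> compose_refl L"
    by (subst gsd) (simp add: compose_refl_append comp_assoc)
  have gS: "g \<in> S" using k gsS nth_mem unfolding g_def by blast
  have LS: "set L \<subseteq> S" using gsS set_drop_subset unfolding L_def by fastforce
  have AS: "set A \<subseteq> S" using gsS set_take_subset unfolding A_def by fastforce
  have lenA: "length A = k" using k by (simp add: A_def)
  have lenL: "length L = length gs - Suc k" by (simp add: L_def)
  have g0: "g \<noteq> 0" using gS SR zR by blast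
  define \<psi> where "\<psi> = compose_refl (rev L) g"
  have pos: "posr R S \<psi>"
  proof (rule ccontr)
    assume np: "\<not> posr R S \<psi>"
    define \<rho> where "\<rho> m = compose_refl (rev (take m L)) g" for m
    have p0: "posr R S (\<rho> 0)" using S_pos[OF gS] by (simp add: \<rho>_def)
    have pl: "\<not> posr R S (\<rho> (length L))" using np by (simp add: \<rho>_def \<psi>_def)
    obtain m where m: "m < length L" and pm: "posr R S (\<rho> m)" and npm: "\<not> posr R S (\<rho> (Suc m))"
      using discrete[of "\<lambda>m. posr R S (\<rho> m)", OF p0 pl] by blast
    have tk: "take (Suc m) L = take m L @ [L ! m]" using take_Suc_conv_app_nth[OF m] .
    have rs: "\<rho> (Suc m) = refl (L ! m) (\<rho> m)" by (simp add: \<rho>_def tk compose_refl_append)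
    have LmS: "L ! m \<in> S" using LS m nth_mem by blast
    have eq: "\<rho> m = L ! m"
    proof (rule ccontr)
      assume "\<rho> m \<noteq> L ! m"
      hence "posr R S (\<rho> (Suc m))" using SP[OF LmS pm] rs by simp
      thus False using npm by simp
    qed
    define v where "v = compose_refl (take m L)"
    have vL: "v (L ! m) = g" unfolding eq[symmetric] by (simp add: v_def \<rho>_def)
    have c1: "\<And>y. v (refl (L ! m) y) = refl g (v y)"
      using iso_conj[OF iso_compose_refl, of "take m L"] vL by (simp add: v_def)
    have Ld: "L = take m L @ L ! m # drop (Suc m) L" using id_take_nth_drop[OF m] .
    have CL: "compose_refl L = v \<circ> refl (L ! m) \<circ> compose_refl (drop (Suc m) L)"
      by (subst Ld) (simp add: compose_refl_append comp_assoc v_def)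
    have "compose_refl gs = compose_refl (A @ take m L @ drop (Suc m) L)"
    proof -
      have c1': "\<And>y. compose_refl (take m L) (refl (L ! m) y) = refl g (compose_refl (take m L) y)"
        using c1 by (simp add: v_def)
      show ?thesis unfolding phi CL by (simp add: fun_eq_iff compose_refl_append c1' v_def)
    qed
    moreover have "set (A @ take m L @ drop (Suc m) L) \<subseteq> S"
      using AS LS by (auto dest: in_set_takeD in_set_dropD)
    ultimately have "weyl_length S (compose_refl gs) \<le> length (A @ take m L @ drop (Suc m) L)"
      using weyl_length_le by blast
    also have "\<dots> < length gs" using lenA lenL m k by simp
    finally show False using len by simp
  qed
  have cpos: "coef S \<delta> \<psi> > 0"
  proof (rule ccontr)
    assume a: "\<not> coef S \<delta> \<psi> > 0"
    obtain kk :: int where "kk \<ge> 0" "coef S \<delta> \<psi> = of_int kk"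
      using pos_coef[OF _ dS] pos by (auto simp: posr_def)
    hence c0: "coef S \<delta> \<psi> = 0" using a by simp
    have W: "refl \<psi> \<in> parabolic_weyl S \<delta>" using WP[OF pos c0] .
    obtain u where uP: "u \<in> parabolic_weyl S \<delta>" and wu: "compose_refl gs = w \<circ> u"
      using mem cos unfolding left_coset_def by blast
    have "u \<circ> refl \<psi> \<in> parabolic_weyl S \<delta>" using uP W unfolding parabolic_weyl_def
      by (rule gen_group_comp)
    hence inb: "compose_refl gs \<circ> refl \<psi> \<in> \<phi>bar" unfolding cos left_coset_def wu
      by (simp add: comp_assoc)
    have CLg: "compose_refl L \<psi> = g" by (simp add: \<psi>_def)
    have c2: "\<And>y. compose_refl L (refl \<psi> y) = refl g (compose_refl L y)"
      using iso_conj[OF iso_compose_refl, of L] CLg by simp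
    have "compose_refl gs \<circ> refl \<psi> = compose_refl (A @ L)"
      unfolding phi by (simp add: fun_eq_iff compose_refl_append c2)
    moreover have "set (A @ L) \<subseteq> S" using AS LS by simp
    ultimately have "weyl_length S (compose_refl gs \<circ> refl \<psi>) \<le> length (A @ L)"
      using weyl_length_le by blast
    also have "\<dots> < length gs" using lenA lenL k by simp
    finally show False using mini inb len by fastforce
  qed
  show ?thesis using pos cpos by (simp add: \<psi>_def L_def g_def)
qed

end



theorem mainTheorem6:
  fixes R S :: "'a::euclidean_space set"
    and w0 \<phi> :: "'a \<Rightarrow> 'a" and \<phi>bar :: "('a \<Rightarrow> 'a) set"
    and \<delta> \<omega> :: 'a and gs :: "'a list" and n i x :: nat
  assumes "root_system R" and "is_base R S" and "simply_laced R"
    and "w0 \<in> weyl R" and "\<forall>w\<in>weyl R. weyl_length S w \<le> weyl_length S w0"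
    and "minuscule_fund_weight R S \<delta> \<omega>"
    and "\<exists>w\<in>weyl R. \<phi>bar = left_coset w (parabolic_weyl S \<delta>)"
    and "\<phi> \<in> \<phi>bar" and "\<forall>\<psi>\<in>\<phi>bar. weyl_length S \<phi> \<le> weyl_length S \<psi>"
    and "set gs \<subseteq> S" and "length gs = n" and "\<phi> = compose_refl gs"
    and "weyl_length S \<phi> = n"
  defines "bs \<equiv> map (\<lambda>\<gamma>. - w0 \<gamma>) gs"
  defines "\<alpha> \<equiv> (\<lambda>k. compose_refl (take k bs) (bs ! k))"
  assumes "i < n" and "x < n" and "cpair (\<alpha> i) (\<alpha> x) = 1"
  shows "\<forall>j<n. cpair (\<alpha> i) (refl (\<alpha> x) (\<alpha> j)) \<ge> -1"
proof -
  have "rsys R S \<delta> \<omega>" unfolding rsys_def using assms(1,2,3,6) by blast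
  then interpret rsys R S \<delta> \<omega> .
  obtain w where cos: "\<phi>bar = left_coset w (parabolic_weyl S \<delta>)" using assms(7) by blast
  define \<psi> where "\<psi> k = compose_refl (rev (drop (Suc k) gs)) (gs ! k)" for k
  have good: "posr R S (\<psi> k) \<and> coef S \<delta> (\<psi> k) > 0" if "k < n" for k
    unfolding \<psi>_def
    using INV[OF assms(10) _ _ cos] assms(8,9,11,12,13) that by simp
  have w0iso: "iso w0" using weyl_iso assms(4) by blast
  define T where "T = w0 \<circ> compose_refl gs"
  have Tiso: "iso T" unfolding T_def by (rule iso_comp[OF w0iso iso_compose_refl])
  have w0lin: "linear w0" using w0iso by (simp add: iso_def)
  have aT: "\<alpha> k = T (\<psi> k)" if k: "k < n" for k
  proof -
    define g where "g = gs ! k"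
    define A where "A = take k gs"
    define L where "L = drop (Suc k) gs"
    have kk: "k < length gs" using k assms(11) by simp
    have gsd: "gs = A @ g # L" using id_take_nth_drop[OF kk] by (simp add: A_def g_def L_def)
    have gR: "g \<in> R" using kk assms(10) SR nth_mem unfolding g_def by blast
    have g0: "g \<noteq> 0" using gR zR by blast
    have "\<alpha> k = compose_refl (map (\<lambda>\<gamma>. - w0 \<gamma>) A) (- w0 g)"
      unfolding \<alpha>_def bs_def A_def g_def using kk by (simp add: take_map)
    also have "- w0 g = w0 (- g)" using linear_neg[OF w0lin] by simp
    also have "compose_refl (map (\<lambda>\<gamma>. - w0 \<gamma>) A) (w0 (- g)) = w0 (compose_refl A (- g))"
      by (rule compose_refl_map[OF w0iso])
    also have "compose_refl A (- g) = compose_refl gs (\<psi> k)"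
      unfolding \<psi>_def by (subst (1) gsd) (simp add: compose_refl_append A_def g_def L_def[symmetric] refl_self[OF g0[unfolded g_def]])
    finally show ?thesis by (simp add: T_def)
  qed
  show ?thesis
  proof (intro allI impI)
    fix j assume j: "j < n"
    have "cpair (\<alpha> i) (refl (\<alpha> x) (\<alpha> j)) = cpair (T (\<psi> i)) (T (refl (\<psi> x) (\<psi> j)))"
      using aT[OF assms(16)] aT[OF assms(17)] aT[OF j] iso_conj[OF Tiso] by simp
    also have "\<dots> = cpair (\<psi> i) (refl (\<psi> x) (\<psi> j))" by (rule iso_cpair[OF Tiso])
    finally have e1: "cpair (\<alpha> i) (refl (\<alpha> x) (\<alpha> j)) = cpair (\<psi> i) (refl (\<psi> x) (\<psi> j))" .
    have "cpair (\<psi> i) (\<psi> x) = 1"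
      using assms(18) aT[OF assms(16)] aT[OF assms(17)] iso_cpair[OF Tiso] by simp
    hence "cpair (\<psi> i) (refl (\<psi> x) (\<psi> j)) \<ge> -1"
      using FIN good[OF assms(16)] good[OF assms(17)] good[OF j] by blast
    thus "cpair (\<alpha> i) (refl (\<alpha> x) (\<alpha> j)) \<ge> -1" using e1 by simp
  qed
qed


end
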